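(* Let $n\ge 1$ be a natural number and let $\Re_{n+1}$ denote the space of real $(n+1)\times(n+1)$ matrices $(a_{ij})$ with indices $0\le i,j\le n$. Then the set $bell(n)\subseteq\Re_{n+1}$ is convex, and $$q(n)\supseteq bell(n)\supseteq c(n).$$
   Context: $bell(n)$ is the set of all $(p_{ij})\in\Re_{n+1}$ such that $p_{00}=1$ and there exist a finite-dimensional Hilbert space $H$, projections $E_1,\dots,E_n,F_1,\dots,F_n$ on $H$, and a density operator (statistical operator) $W$ on $H\otimes H$ with $p_{i0}=\mathrm{tr}[W(E_i\otimes I)]$, $p_{0j}=\mathrm{tr}[W(I\otimes F_j)]$, $p_{ij}=\mathrm{tr}[W(E_i\otimes F_j)]$ for $i,j=1,\dots,n$ ($I$ the identity on $H$). $c(n)$ is the set of all $(p_{ij})\in\Re_{n+1}$ such that $p_{00}=1$ and there exist a probability space $(X,\Sigma,\mu)$ and events $A_1,\dots,A_n,B_1,\dots,B_n\in\Sigma$ with $p_{i0}=\mu(A_i)$, $p_{0j}=\mu(B_j)$, $p_{ij}=\mu(A_i\cap B_j)$ for $i,j=1,\dots,n$. $q(n)$ is the set of all $(p_{ij})\in\Re_{n+1}$ such that $p_{00}=1$ and there exist a Hilbert space $H$, projections $E_1,\dots,E_n,F_1,\dots,F_n$ on $H$ (not necessarily commuting), and a density operator $W$ on $H$ with $p_{i0}=\mathrm{tr}(WE_i)$, $p_{0j}=\mathrm{tr}(WF_j)$, $p_{ij}=\mathrm{tr}[W(E_i\wedge F_j)]$ for $i,j=1,\dots,n$, where $E_i\wedge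 F_j$ is the projection onto $E_i(H)\cap F_j(H)$. *)

theory Defs
  imports "Jordan_Normal_Form.Matrix" "HOL-Probability.Probability"
begin

text \<open>A finite-dimensional complex Hilbert space H is represented as C^d (d = dim H),
  operators on H as complex d x d matrices.\<close>

definition mtrace :: "complex mat \<Rightarrow> complex" where
  "mtrace A = (\<Sum>i<dim_row A. A $$ (i, i))"

definition adj :: "complex mat \<Rightarrow> complex mat" where
  "adj A = Matrix.mat (dim_col A) (dim_row A) (\<lambda>(i, j). cnj (A $$ (j, i)))"

definition kron :: "complex mat \<Rightarrow> complex mat \<Rightarrow> complex mat" where
  "kron A B = Matrix.mat (dim_row A * dim_row B) (dim_col A * dim_col B)
     (\<lambda>(i, j). A $$ (i div dim_row B, j div dim_col B) * B $$ (i mod dim_row B, j mod dim_col B))"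

definition is_proj :: "nat \<Rightarrow> complex mat \<Rightarrow> bool" where
  "is_proj d P \<longleftrightarrow> P \<in> carrier_mat d d \<and> P * P = P \<and> adj P = P"

definition is_density :: "nat \<Rightarrow> complex mat \<Rightarrow> bool" where
  "is_density d W \<longleftrightarrow> W \<in> carrier_mat d d
     \<and> (\<forall>v \<in> carrier_vec d. Im ((W *\<^sub>v v) \<bullet>c v) = 0 \<and> Re ((W *\<^sub>v v) \<bullet>c v) \<ge> 0)
     \<and> mtrace W = 1"

text \<open>E \<wedge> F: the projection onto E(H) \<inter> F(H) (range of a projection = its fixed vectors).\<close>
definition proj_meet :: "nat \<Rightarrow> complex mat \<Rightarrow> complex mat \<Rightarrow> complex mat" where
  "proj_meet d E F = (THE R. is_proj d R \<and>
     (\<forall>v \<in> carrier_vec d. R *\<^sub>v v = v \<longleftrightarrow> (E *\<^sub>v v = v \<and> F *\<^sub>v v = v)))"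

definition bell :: "nat \<Rightarrow> real mat set" where
  "bell n = {p \<in> carrier_mat (n+1) (n+1). p $$ (0, 0) = 1 \<and>
     (\<exists>d E F W. (\<forall>i\<in>{1..n}. is_proj d (E i) \<and> is_proj d (F i)) \<and> is_density (d * d) W \<and>
        (\<forall>i\<in>{1..n}. complex_of_real (p $$ (i, 0)) = mtrace (W * kron (E i) (1\<^sub>m d))) \<and>
        (\<forall>j\<in>{1..n}. complex_of_real (p $$ (0, j)) = mtrace (W * kron (1\<^sub>m d) (F j))) \<and>
        (\<forall>i\<in>{1..n}. \<forall>j\<in>{1..n}. complex_of_real (p $$ (i, j)) = mtrace (W * kron (E i) (F j))))}"

text \<open>c(n), where the probability space ranges over measures on the type 'a.\<close>
definition cset :: "nat \<Rightarrow> 'a itself \<Rightarrow> real mat set" where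
  "cset n _ = {p \<in> carrier_mat (n+1) (n+1). p $$ (0, 0) = 1 \<and>
     (\<exists>(M :: 'a measure) A B. prob_space M \<and> (\<forall>i\<in>{1..n}. A i \<in> sets M \<and> B i \<in> sets M) \<and>
        (\<forall>i\<in>{1..n}. p $$ (i, 0) = measure M (A i)) \<and>
        (\<forall>j\<in>{1..n}. p $$ (0, j) = measure M (B j)) \<and>
        (\<forall>i\<in>{1..n}. \<forall>j\<in>{1..n}. p $$ (i, j) = measure M (A i \<inter> B j)))}"

definition qset :: "nat \<Rightarrow> real mat set" where
  "qset n = {p \<in> carrier_mat (n+1) (n+1). p $$ (0, 0) = 1 \<and>
     (\<exists>d E F W. (\<forall>i\<in>{1..n}. is_proj d (E i) \<and> is_proj d (F i)) \<and> is_density d W \<and>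
        (\<forall>i\<in>{1..n}. complex_of_real (p $$ (i, 0)) = mtrace (W * E i)) \<and>
        (\<forall>j\<in>{1..n}. complex_of_real (p $$ (0, j)) = mtrace (W * F j)) \<and>
        (\<forall>i\<in>{1..n}. \<forall>j\<in>{1..n}. complex_of_real (p $$ (i, j)) = mtrace (W * proj_meet d (E i) (F j))))}"

definition convex_mat_set :: "real mat set \<Rightarrow> bool" where
  "convex_mat_set S \<longleftrightarrow> (\<forall>p\<in>S. \<forall>q\<in>S. \<forall>t::real. 0 \<le> t \<and> t \<le> 1 \<longrightarrow> t \<cdot>\<^sub>m p + (1 - t) \<cdot>\<^sub>m q \<in> S)"

end

theory Submission
  imports Defs
begin

lemma sum_shift_ivl: "(\<Sum>x\<in>{c..<c+n}. f x) = (\<Sum>b<n. f (c + b::nat))"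
  by (induct n) auto

lemma sum_prod_split: "(\<Sum>k<m*n. f k) = (\<Sum>a<m. \<Sum>b<n. f (a*n+b::nat))"
proof -
  have "(\<Sum>k<m*n. f k) = (\<Sum>a<m. sum f {a*n..<a*n+n})"
    using sum.nat_group[of f n m] by simp
  also have "\<dots> = (\<Sum>a<m. \<Sum>b<n. f (a*n+b))"
    by (simp add: sum_shift_ivl)
  finally show ?thesis .
qed

lemma sum_add_split: "(\<Sum>x<a+b. f x) = (\<Sum>x<a. f x) + (\<Sum>x<b. f (a+x::nat))"
  by (induct b) (auto simp: add.assoc)

lemma kron_carrier[simp]: "kron A B \<in> carrier_mat (dim_row A * dim_row B) (dim_col A * dim_col B)"
  "dim_row (kron A B) = dim_row A * dim_row B" "dim_col (kron A B) = dim_col A * dim_col B"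
  by (auto simp: kron_def)

lemma index_kron: "i < dim_row A * dim_row B \<Longrightarrow> j < dim_col A * dim_col B \<Longrightarrow>
  kron A B $$ (i,j) = A $$ (i div dim_row B, j div dim_col B) * B $$ (i mod dim_row B, j mod dim_col B)"
  by (simp add: kron_def)

lemma divmod_lt: "i < m * (k::nat) \<Longrightarrow> i div k < m \<and> i mod k < k"
  by (metis less_mult_imp_div_less mod_less_divisor mult_0_right neq0_conv not_less_zero)

lemma div_lt: "i < m * (k::nat) \<Longrightarrow> i div k < m" using divmod_lt by blast
lemma mod_lt: "i < m * (k::nat) \<Longrightarrow> i mod k < k" using divmod_lt by blast

lemma kron_mult:
  assumes A: "A \<in> carrier_mat m m'" and C: "C \<in> carrier_mat m' m''"
    and B: "B \<in> carrier_mat k k'" and D: "D \<in> carrier_mat k' k''"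
  shows "kron A B * kron C D = kron (A * C) (B * D)"
proof (rule eq_matI)
  fix i j assume i: "i < dim_row (kron (A * C) (B * D))" and j: "j < dim_col (kron (A * C) (B * D))"
  have i': "i < m * k" and j': "j < m'' * k''" using i j A B C D by auto
  note di = divmod_lt[OF i'] and dj = divmod_lt[OF j']
  have "(kron A B * kron C D) $$ (i,j) = (\<Sum>l<m'*k'. kron A B $$ (i,l) * kron C D $$ (l,j))"
    using A B C D i' j' by (simp add: scalar_prod_def atLeast0LessThan)
  also have "\<dots> = (\<Sum>a<m'. \<Sum>b<k'. kron A B $$ (i,a*k'+b) * kron C D $$ (a*k'+b,j))"
    by (rule sum_prod_split)
  also have "\<dots> = (\<Sum>a<m'. \<Sum>b<k'. (A $$ (i div k, a) * C $$ (a, j div k'')) * (B $$ (i mod k, b) * D $$ (b, j mod k'')))"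
  proof (intro sum.cong refl)
    fix a b assume a: "a \<in> {..<m'}" and b: "b \<in> {..<k'}"
    have ab: "a * k' + b < m' * k'"
      using a b by (metis lessThan_iff add.commute add_less_cancel_left mult.commute mult_Suc less_le_trans Suc_leI mult_le_mono1)
    have "(a*k'+b) div k' = a" "(a*k'+b) mod k' = b" using b by auto
    then show "kron A B $$ (i,a*k'+b) * kron C D $$ (a*k'+b,j) = (A $$ (i div k, a) * C $$ (a, j div k'')) * (B $$ (i mod k, b) * D $$ (b, j mod k''))"
      using A B C D i' j' ab by (simp add: index_kron)
  qed
  also have "\<dots> = (A * C) $$ (i div k, j div k'') * (B * D) $$ (i mod k, j mod k'')"
    using A B C D di dj by (simp add: scalar_prod_def atLeast0LessThan sum_product)
  also have "\<dots> = kron (A * C) (B * D) $$ (i,j)"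
    using A B C D i' j' by (simp add: index_kron)
  finally show "(kron A B * kron C D) $$ (i,j) = kron (A * C) (B * D) $$ (i,j)" .
next
  show "dim_row (kron A B * kron C D) = dim_row (kron (A * C) (B * D))"
    "dim_col (kron A B * kron C D) = dim_col (kron (A * C) (B * D))" using A B C D by auto
qed

lemma adj_dims[simp]: "dim_row (adj A) = dim_col A" "dim_col (adj A) = dim_row A"
  by (auto simp: adj_def)

lemma index_adj[simp]: "i < dim_col A \<Longrightarrow> j < dim_row A \<Longrightarrow> adj A $$ (i,j) = cnj (A $$ (j,i))"
  by (simp add: adj_def)

lemma adj_mult: assumes "A \<in> carrier_mat n m" "B \<in> carrier_mat m k"
  shows "adj (A * B) = adj B * adj A"
  by (rule eq_matI) (use assms in \<open>auto simp: scalar_prod_def cnj_sum mult.commute\<close>)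

lemma adj_kron: "adj (kron A B) = kron (adj A) (adj B)"
  by (rule eq_matI) (auto simp: index_kron div_lt mod_lt)

lemma adj_one[simp]: "adj (1\<^sub>m n) = 1\<^sub>m n"
  by (rule eq_matI) auto

lemma mat_eq_vec: fixes A B :: "complex mat" assumes "A \<in> carrier_mat n m" "B \<in> carrier_mat n m"
  and "\<And>v. v \<in> carrier_vec m \<Longrightarrow> A *\<^sub>v v = B *\<^sub>v v"
shows "A = B"
proof (rule eq_matI)
  fix i j assume i: "i < dim_row B" and j: "j < dim_col B"
  have "vec_index (A *\<^sub>v unit_vec m j) i = vec_index (B *\<^sub>v unit_vec m j) i" using assms(3)[of "unit_vec m j"] by simp
  then show "A $$ (i,j) = B $$ (i,j)" using i j assms(1,2) by simp
qed (use assms in auto)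

lemma proj_unique:
  assumes R1: "is_proj d R1" and R2: "is_proj d R2"
    and fx: "\<And>v. v \<in> carrier_vec d \<Longrightarrow> R1 *\<^sub>v v = v \<longleftrightarrow> R2 *\<^sub>v v = v"
  shows "R1 = R2"
proof -
  have c1: "R1 \<in> carrier_mat d d" and c2: "R2 \<in> carrier_mat d d"
    and i1: "R1 * R1 = R1" and i2: "R2 * R2 = R2" and a1: "adj R1 = R1" and a2: "adj R2 = R2"
    using R1 R2 by (auto simp: is_proj_def)
  have m21: "R2 * R1 = R1"
  proof (rule mat_eq_vec[OF _ c1])
    fix v :: "complex Matrix.vec" assume v: "v \<in> carrier_vec d"
    have "R1 *\<^sub>v (R1 *\<^sub>v v) = R1 *\<^sub>v v" using i1 c1 v by (metis assoc_mult_mat_vec)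
    then have "R2 *\<^sub>v (R1 *\<^sub>v v) = R1 *\<^sub>v v" using fx[of "R1 *\<^sub>v v"] c1 v by auto
    then show "(R2 * R1) *\<^sub>v v = R1 *\<^sub>v v" using c1 c2 v by auto
  qed (use c1 c2 in auto)
  have m12: "R1 * R2 = R2"
  proof (rule mat_eq_vec[OF _ c2])
    fix v :: "complex Matrix.vec" assume v: "v \<in> carrier_vec d"
    have "R2 *\<^sub>v (R2 *\<^sub>v v) = R2 *\<^sub>v v" using i2 c2 v by (metis assoc_mult_mat_vec)
    then have "R1 *\<^sub>v (R2 *\<^sub>v v) = R2 *\<^sub>v v" using fx[of "R2 *\<^sub>v v"] c2 v by auto
    then show "(R1 * R2) *\<^sub>v v = R2 *\<^sub>v v" using c1 c2 v by auto
  qed (use c1 c2 in auto)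
  have "R1 = adj (R2 * R1)" using m21 a1 by simp
  also have "\<dots> = adj R1 * adj R2" using adj_mult[OF c2 c1] .
  also have "\<dots> = R2" using a1 a2 m12 by simp
  finally show ?thesis .
qed

lemma kron_proj: assumes "is_proj d E" "is_proj d F" shows "is_proj (d*d) (kron E F)"
  using assms by (auto simp: is_proj_def kron_mult adj_kron intro!: carrier_matI)

lemma one_proj: "is_proj d (1\<^sub>m d)" by (auto simp: is_proj_def)

lemma proj_meet_kron:
  assumes E: "is_proj d E" and F: "is_proj d F"
  shows "proj_meet (d*d) (kron E (1\<^sub>m d)) (kron (1\<^sub>m d) F) = kron E F"
proof -
  have cE: "E \<in> carrier_mat d d" and cF: "F \<in> carrier_mat d d" and iE: "E * E = E" and iF: "F * F = F"
    using E F by (auto simp: is_proj_def)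
  have m1: "kron E (1\<^sub>m d) * kron E F = kron E F" using cE cF iE by (simp add: kron_mult[of _ d d _ d _ d d])
  have m2: "kron (1\<^sub>m d) F * kron E F = kron E F" using cE cF iF by (simp add: kron_mult[of _ d d _ d _ d d])
  have m3: "kron E (1\<^sub>m d) * kron (1\<^sub>m d) F = kron E F" using cE cF by (simp add: kron_mult[of _ d d _ d _ d d])
  have ck: "kron E F \<in> carrier_mat (d*d) (d*d)" "kron E (1\<^sub>m d) \<in> carrier_mat (d*d) (d*d)"
    "kron (1\<^sub>m d) F \<in> carrier_mat (d*d) (d*d)" using cE cF by (auto intro!: carrier_matI)
  have P: "\<forall>v \<in> carrier_vec (d*d). kron E F *\<^sub>v v = v \<longleftrightarrow>
      (kron E (1\<^sub>m d) *\<^sub>v v = v \<and> kron (1\<^sub>m d) F *\<^sub>v v = v)"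
  proof (intro ballI iffI conjI)
    fix v :: "complex Matrix.vec" assume v: "v \<in> carrier_vec (d*d)"
    { assume h: "kron E F *\<^sub>v v = v"
      have "kron E (1\<^sub>m d) *\<^sub>v v = kron E (1\<^sub>m d) *\<^sub>v (kron E F *\<^sub>v v)" using h by simp
      also have "\<dots> = (kron E (1\<^sub>m d) * kron E F) *\<^sub>v v" using ck v by (metis assoc_mult_mat_vec)
      finally show "kron E (1\<^sub>m d) *\<^sub>v v = v" using m1 h by simp }
    { assume h: "kron E F *\<^sub>v v = v"
      have "kron (1\<^sub>m d) F *\<^sub>v v = kron (1\<^sub>m d) F *\<^sub>v (kron E F *\<^sub>v v)" using h by simp
      also have "\<dots> = (kron (1\<^sub>m d) F * kron E F) *\<^sub>v v" using ck v by (metis assoc_mult_mat_vec)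
      finally show "kron (1\<^sub>m d) F *\<^sub>v v = v" using m2 h by simp }
    { assume h: "kron E (1\<^sub>m d) *\<^sub>v v = v \<and> kron (1\<^sub>m d) F *\<^sub>v v = v"
      have "kron E F *\<^sub>v v = (kron E (1\<^sub>m d) * kron (1\<^sub>m d) F) *\<^sub>v v" using m3 by simp
      also have "\<dots> = kron E (1\<^sub>m d) *\<^sub>v (kron (1\<^sub>m d) F *\<^sub>v v)" using ck v by (metis assoc_mult_mat_vec)
      finally show "kron E F *\<^sub>v v = v" using h by simp }
  qed
  show ?thesis unfolding proj_meet_def
  proof (rule the_equality)
    show "is_proj (d*d) (kron E F) \<and> (\<forall>v \<in> carrier_vec (d*d). kron E F *\<^sub>v v = v \<longleftrightarrow>
      (kron E (1\<^sub>m d) *\<^sub>v v = v \<and> kron (1\<^sub>m d) F *\<^sub>v v = v))"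
      using P kron_proj[OF E F] by blast
    fix R assume "is_proj (d * d) R \<and> (\<forall>v\<in>carrier_vec (d * d). (R *\<^sub>v v = v) = (kron E (1\<^sub>m d) *\<^sub>v v = v \<and> kron (1\<^sub>m d) F *\<^sub>v v = v))"
    then show "R = kron E F" using proj_unique[of "d*d" R "kron E F"] kron_proj[OF E F] P by auto
  qed
qed

lemma bell_sub_q: "bell n \<subseteq> qset n"
proof
  fix p assume "p \<in> bell n"
  then obtain d E F W where p: "p \<in> carrier_mat (n+1) (n+1)" "p $$ (0,0) = 1"
    and pr: "\<forall>i\<in>{1..n}. is_proj d (E i) \<and> is_proj d (F i)" and W: "is_density (d * d) W"
    and h1: "\<forall>i\<in>{1..n}. complex_of_real (p $$ (i, 0)) = mtrace (W * kron (E i) (1\<^sub>m d))"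
    and h2: "\<forall>j\<in>{1..n}. complex_of_real (p $$ (0, j)) = mtrace (W * kron (1\<^sub>m d) (F j))"
    and h3: "\<forall>i\<in>{1..n}. \<forall>j\<in>{1..n}. complex_of_real (p $$ (i, j)) = mtrace (W * kron (E i) (F j))"
    unfolding bell_def by blast
  have a1: "\<forall>i\<in>{1..n}. is_proj (d * d) (kron (E i) (1\<^sub>m d)) \<and> is_proj (d * d) (kron (1\<^sub>m d) (F i))"
    using pr kron_proj one_proj by auto
  have a3: "\<forall>i\<in>{1..n}. \<forall>j\<in>{1..n}. complex_of_real (p $$ (i, j)) = mtrace (W * proj_meet (d * d) (kron (E i) (1\<^sub>m d)) (kron (1\<^sub>m d) (F j)))"
    using h3 pr proj_meet_kron by auto
  show "p \<in> qset n" unfolding qset_def mem_Collect_eq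
    apply (intro conjI p)
    apply (rule exI[of _ "d*d"], rule exI[of _ "\<lambda>i. kron (E i) (1\<^sub>m d)"],
       rule exI[of _ "\<lambda>i. kron (1\<^sub>m d) (F i)"], rule exI[of _ W])
    using a1 a3 h1 h2 W by auto
qed


definition wf :: "nat \<Rightarrow> nat \<Rightarrow> real \<Rightarrow> complex mat \<Rightarrow> complex mat \<Rightarrow> nat \<Rightarrow> nat \<Rightarrow> nat \<Rightarrow> nat \<Rightarrow> complex" where
  "wf d1 d2 t W1 W2 a b a' b' = (if a<d1 \<and> b<d1 \<and> a'<d1 \<and> b'<d1 then complex_of_real t * W1 $$ (a*d1+b, a'*d1+b')
     else if d1\<le>a \<and> d1\<le>b \<and> d1\<le>a' \<and> d1\<le>b' then complex_of_real (1-t) * W2 $$ ((a-d1)*d2+(b-d1), (a'-d1)*d2+(b'-d1)) else 0)"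

lemma four_split:
  "(\<Sum>a<d1+d2. \<Sum>b<d1+d2. \<Sum>a'<d1+d2. \<Sum>b'<d1+d2. wf d1 d2 t W1 W2 a b a' b' * H a b a' b') =
   complex_of_real t * (\<Sum>a<d1. \<Sum>b<d1. \<Sum>a'<d1. \<Sum>b'<d1. W1 $$ (a*d1+b, a'*d1+b') * H a b a' b') +
   complex_of_real (1-t) * (\<Sum>a<d2. \<Sum>b<d2. \<Sum>a'<d2. \<Sum>b'<d2. W2 $$ (a*d2+b, a'*d2+b') * H (d1+a) (d1+b) (d1+a') (d1+b'))"
  by (simp add: sum_add_split sum.distrib wf_def sum_distrib_left mult.assoc)



lemma idx_lt: "a < m \<Longrightarrow> b < n \<Longrightarrow> a * n + b < m * (n::nat)"
  by (metis add.commute add_less_cancel_left mult.commute mult_Suc less_le_trans Suc_leI mult_le_mono1)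

lemma idx_div[simp]: "b < (n::nat) \<Longrightarrow> (a * n + b) div n = a" by auto
lemma idx_mod[simp]: "b < (n::nat) \<Longrightarrow> (a * n + b) mod n = b" by auto

lemma tr_kron:
  assumes W: "W \<in> carrier_mat (m*m) (m*m)" and A: "A \<in> carrier_mat m m" and B: "B \<in> carrier_mat m m"
  shows "mtrace (W * kron A B) = (\<Sum>a<m. \<Sum>b<m. \<Sum>a'<m. \<Sum>b'<m. W $$ (a*m+b, a'*m+b') * (A $$ (a',a) * B $$ (b',b)))"
proof -
  have "mtrace (W * kron A B) = (\<Sum>k<m*m. \<Sum>l<m*m. W$$(k,l) * kron A B $$ (l,k))"
    using assms by (simp add: mtrace_def scalar_prod_def atLeast0LessThan)
  also have "\<dots> = (\<Sum>a<m. \<Sum>b<m. \<Sum>a'<m. \<Sum>b'<m. W$$(a*m+b,a'*m+b') * kron A B $$(a'*m+b', a*m+b))"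
    by (simp only: sum_prod_split)
  also have "\<dots> = (\<Sum>a<m. \<Sum>b<m. \<Sum>a'<m. \<Sum>b'<m. W $$ (a*m+b, a'*m+b') * (A $$ (a',a) * B $$ (b',b)))"
    using A B by (auto intro!: sum.cong simp: index_kron idx_lt)
  finally show ?thesis .
qed

lemma quad_form:
  assumes W: "W \<in> carrier_mat (m*m) (m*m)" and v: "v \<in> carrier_vec (m*m)"
  shows "(W *\<^sub>v v) \<bullet>c v = (\<Sum>a<m. \<Sum>b<m. \<Sum>a'<m. \<Sum>b'<m. W $$ (a*m+b, a'*m+b') * (vec_index v (a'*m+b') * cnj (vec_index v (a*m+b))))"
proof -
  have "(W *\<^sub>v v) \<bullet>c v = (\<Sum>k<m*m. (\<Sum>l<m*m. W$$(k,l) * vec_index v l) * cnj (vec_index v k))"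
    using assms by (simp add: scalar_prod_def atLeast0LessThan)
  also have "\<dots> = (\<Sum>k<m*m. \<Sum>l<m*m. W$$(k,l) * (vec_index v l * cnj (vec_index v k)))"
    by (simp add: sum_distrib_right mult.assoc)
  also have "\<dots> = (\<Sum>a<m. \<Sum>b<m. \<Sum>a'<m. \<Sum>b'<m. W $$ (a*m+b, a'*m+b') * (vec_index v (a'*m+b') * cnj (vec_index v (a*m+b))))"
    by (simp only: sum_prod_split)
  finally show ?thesis .
qed

lemma trace_split: "mtrace W = (\<Sum>a<m. \<Sum>b<m. W $$ (a*m+b, a*m+b))" if "W \<in> carrier_mat (m*m) (m*m)"
  using that by (simp add: mtrace_def sum_prod_split)



definition bf :: "nat \<Rightarrow> complex mat \<Rightarrow> complex mat \<Rightarrow> nat \<Rightarrow> nat \<Rightarrow> complex" where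
  "bf d1 X Y i j = (if i < d1 \<and> j < d1 then X $$ (i,j) else if d1 \<le> i \<and> d1 \<le> j then Y $$ (i-d1, j-d1) else 0)"

definition dsum :: "nat \<Rightarrow> nat \<Rightarrow> complex mat \<Rightarrow> complex mat \<Rightarrow> complex mat" where
  "dsum d1 d2 X Y = Matrix.mat (d1+d2) (d1+d2) (\<lambda>(i,j). bf d1 X Y i j)"

lemma dsum_carrier[simp]: "dsum d1 d2 X Y \<in> carrier_mat (d1+d2) (d1+d2)"
  "dim_row (dsum d1 d2 X Y) = d1+d2" "dim_col (dsum d1 d2 X Y) = d1+d2"
  by (auto simp: dsum_def)

lemma index_dsum[simp]: "i < d1+d2 \<Longrightarrow> j < d1+d2 \<Longrightarrow> dsum d1 d2 X Y $$ (i,j) = bf d1 X Y i j"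
  by (simp add: dsum_def)

lemma dsum_mult:
  assumes "X \<in> carrier_mat d1 d1" "X' \<in> carrier_mat d1 d1" "Y \<in> carrier_mat d2 d2" "Y' \<in> carrier_mat d2 d2"
  shows "dsum d1 d2 X Y * dsum d1 d2 X' Y' = dsum d1 d2 (X * X') (Y * Y')"
proof (rule eq_matI)
  fix i j assume "i < dim_row (dsum d1 d2 (X * X') (Y * Y'))" "j < dim_col (dsum d1 d2 (X * X') (Y * Y'))"
  then have i: "i < d1+d2" and j: "j < d1+d2" by auto
  have "(dsum d1 d2 X Y * dsum d1 d2 X' Y') $$ (i,j) = (\<Sum>c<d1+d2. bf d1 X Y i c * bf d1 X' Y' c j)"
    using i j by (simp add: scalar_prod_def atLeast0LessThan)
  also have "\<dots> = bf d1 (X * X') (Y * Y') i j"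
    using assms i j by (cases "i < d1"; cases "j < d1") (auto simp: sum_add_split bf_def scalar_prod_def atLeast0LessThan)
  finally show "(dsum d1 d2 X Y * dsum d1 d2 X' Y') $$ (i,j) = dsum d1 d2 (X * X') (Y * Y') $$ (i,j)"
    using i j by simp
qed auto

lemma adj_dsum: assumes "X \<in> carrier_mat d1 d1" "Y \<in> carrier_mat d2 d2"
  shows "adj (dsum d1 d2 X Y) = dsum d1 d2 (adj X) (adj Y)"
  by (rule eq_matI) (use assms in \<open>auto simp: bf_def\<close>)

lemma one_dsum: "1\<^sub>m (d1+d2) = dsum d1 d2 (1\<^sub>m d1) (1\<^sub>m d2)"
  by (rule eq_matI) (auto simp: bf_def)

lemma dsum_proj: "is_proj d1 X \<Longrightarrow> is_proj d2 Y \<Longrightarrow> is_proj (d1+d2) (dsum d1 d2 X Y)"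
  unfolding is_proj_def by (auto simp: dsum_mult adj_dsum)

definition wsum :: "nat \<Rightarrow> nat \<Rightarrow> real \<Rightarrow> complex mat \<Rightarrow> complex mat \<Rightarrow> complex mat" where
  "wsum d1 d2 t W1 W2 = Matrix.mat ((d1+d2)*(d1+d2)) ((d1+d2)*(d1+d2))
     (\<lambda>(k,l). wf d1 d2 t W1 W2 (k div (d1+d2)) (k mod (d1+d2)) (l div (d1+d2)) (l mod (d1+d2)))"

lemma wsum_carrier[simp]: "wsum d1 d2 t W1 W2 \<in> carrier_mat ((d1+d2)*(d1+d2)) ((d1+d2)*(d1+d2))"
  by (simp add: wsum_def)

lemma index_wsum[simp]: "a < d1+d2 \<Longrightarrow> b < d1+d2 \<Longrightarrow> a' < d1+d2 \<Longrightarrow> b' < d1+d2 \<Longrightarrow>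
  wsum d1 d2 t W1 W2 $$ (a*(d1+d2)+b, a'*(d1+d2)+b') = wf d1 d2 t W1 W2 a b a' b'"
  by (simp add: wsum_def idx_lt)

lemma tr_comb:
  assumes "A1 \<in> carrier_mat d1 d1" "B1 \<in> carrier_mat d1 d1" "A2 \<in> carrier_mat d2 d2" "B2 \<in> carrier_mat d2 d2"
    "W1 \<in> carrier_mat (d1*d1) (d1*d1)" "W2 \<in> carrier_mat (d2*d2) (d2*d2)"
  shows "mtrace (wsum d1 d2 t W1 W2 * kron (dsum d1 d2 A1 A2) (dsum d1 d2 B1 B2)) =
    complex_of_real t * mtrace (W1 * kron A1 B1) + complex_of_real (1-t) * mtrace (W2 * kron A2 B2)"
proof -
  have "mtrace (wsum d1 d2 t W1 W2 * kron (dsum d1 d2 A1 A2) (dsum d1 d2 B1 B2)) =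
    (\<Sum>a<d1+d2. \<Sum>b<d1+d2. \<Sum>a'<d1+d2. \<Sum>b'<d1+d2. wf d1 d2 t W1 W2 a b a' b' * (bf d1 A1 A2 a' a * bf d1 B1 B2 b' b))"
    by (subst tr_kron) (auto intro!: sum.cong)
  also have "\<dots> = complex_of_real t * (\<Sum>a<d1. \<Sum>b<d1. \<Sum>a'<d1. \<Sum>b'<d1. W1 $$ (a*d1+b, a'*d1+b') * (A1 $$ (a',a) * B1 $$ (b',b))) +
   complex_of_real (1-t) * (\<Sum>a<d2. \<Sum>b<d2. \<Sum>a'<d2. \<Sum>b'<d2. W2 $$ (a*d2+b, a'*d2+b') * (A2 $$ (a',a) * B2 $$ (b',b)))"
    by (subst four_split) (simp add: bf_def)
  also have "\<dots> = complex_of_real t * mtrace (W1 * kron A1 B1) + complex_of_real (1-t) * mtrace (W2 * kron A2 B2)"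
    using assms by (simp add: tr_kron)
  finally show ?thesis .
qed



lemma dens_comb:
  assumes D1: "is_density (d1*d1) W1" and D2: "is_density (d2*d2) W2" and t: "0 \<le> t" "t \<le> 1"
  shows "is_density ((d1+d2)*(d1+d2)) (wsum d1 d2 t W1 W2)"
proof -
  let ?d = "d1+d2"
  let ?W = "wsum d1 d2 t W1 W2"
  have c1: "W1 \<in> carrier_mat (d1*d1) (d1*d1)" and c2: "W2 \<in> carrier_mat (d2*d2) (d2*d2)"
    and tr1: "mtrace W1 = 1" and tr2: "mtrace W2 = 1"
    and p1: "\<And>v. v \<in> carrier_vec (d1*d1) \<Longrightarrow> Im ((W1 *\<^sub>v v) \<bullet>c v) = 0 \<and> Re ((W1 *\<^sub>v v) \<bullet>c v) \<ge> 0"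
    and p2: "\<And>v. v \<in> carrier_vec (d2*d2) \<Longrightarrow> Im ((W2 *\<^sub>v v) \<bullet>c v) = 0 \<and> Re ((W2 *\<^sub>v v) \<bullet>c v) \<ge> 0"
    using D1 D2 unfolding is_density_def by auto
  have "mtrace ?W = (\<Sum>a<?d. \<Sum>b<?d. wf d1 d2 t W1 W2 a b a b)"
    by (subst trace_split[of _ ?d]) (auto intro!: sum.cong)
  also have "\<dots> = complex_of_real t * mtrace W1 + complex_of_real (1-t) * mtrace W2"
    using c1 c2 by (simp add: trace_split[of W1 d1] trace_split[of W2 d2] sum_add_split sum.distrib wf_def sum_distrib_left)
  finally have trW: "mtrace ?W = 1" using tr1 tr2
    by (metis add_diff_cancel_left' diff_add_cancel mult.right_neutral of_real_1 of_real_add)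
  have pos: "Im ((?W *\<^sub>v v) \<bullet>c v) = 0 \<and> Re ((?W *\<^sub>v v) \<bullet>c v) \<ge> 0" if v: "v \<in> carrier_vec (?d*?d)" for v
  proof -
    define v1 where "v1 = Matrix.vec (d1*d1) (\<lambda>k. vec_index v ((k div d1)*?d + k mod d1))"
    define v2 where "v2 = Matrix.vec (d2*d2) (\<lambda>k. vec_index v ((d1 + k div d2)*?d + (d1 + k mod d2)))"
    have v1c: "v1 \<in> carrier_vec (d1*d1)" and v2c: "v2 \<in> carrier_vec (d2*d2)" by (auto simp: v1_def v2_def)
    have "(?W *\<^sub>v v) \<bullet>c v = (\<Sum>a<?d. \<Sum>b<?d. \<Sum>a'<?d. \<Sum>b'<?d. wf d1 d2 t W1 W2 a b a' b' *
        (vec_index v (a'*?d+b') * cnj (vec_index v (a*?d+b))))"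
      by (subst quad_form[OF _ v]) (auto intro!: sum.cong)
    also have "\<dots> = complex_of_real t * ((W1 *\<^sub>v v1) \<bullet>c v1) + complex_of_real (1-t) * ((W2 *\<^sub>v v2) \<bullet>c v2)"
    proof -
      have e1: "(W1 *\<^sub>v v1) \<bullet>c v1 = (\<Sum>a<d1. \<Sum>b<d1. \<Sum>a'<d1. \<Sum>b'<d1. W1 $$ (a*d1+b, a'*d1+b') *
        (vec_index v (a'*?d+b') * cnj (vec_index v (a*?d+b))))"
        by (subst quad_form[OF c1 v1c]) (auto intro!: sum.cong simp: v1_def idx_lt)
      have e2: "(W2 *\<^sub>v v2) \<bullet>c v2 = (\<Sum>a<d2. \<Sum>b<d2. \<Sum>a'<d2. \<Sum>b'<d2. W2 $$ (a*d2+b, a'*d2+b') *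
        (vec_index v ((d1+a')*?d+(d1+b')) * cnj (vec_index v ((d1+a)*?d+(d1+b)))))"
        by (subst quad_form[OF c2 v2c]) (auto intro!: sum.cong simp: v2_def idx_lt)
      show ?thesis unfolding e1 e2 by (rule four_split)
    qed
    finally have eq: "(?W *\<^sub>v v) \<bullet>c v = complex_of_real t * ((W1 *\<^sub>v v1) \<bullet>c v1) + complex_of_real (1-t) * ((W2 *\<^sub>v v2) \<bullet>c v2)" .
    show ?thesis unfolding eq using p1[OF v1c] p2[OF v2c] t by simp
  qed
  show ?thesis unfolding is_density_def using trW pos by simp
qed



lemma bell_convex: "convex_mat_set (bell n)"
  unfolding convex_mat_set_def
proof (intro ballI allI impI)
  fix p q and t :: real assume pB: "p \<in> bell n" and qB: "q \<in> bell n" and t: "0 \<le> t \<and> t \<le> 1"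
  obtain d1 E1 F1 W1 where p: "p \<in> carrier_mat (n+1) (n+1)" "p $$ (0,0) = 1"
    and pr1: "\<forall>i\<in>{1..n}. is_proj d1 (E1 i) \<and> is_proj d1 (F1 i)" and Wd1: "is_density (d1 * d1) W1"
    and p1: "\<forall>i\<in>{1..n}. complex_of_real (p $$ (i, 0)) = mtrace (W1 * kron (E1 i) (1\<^sub>m d1))"
    and p2: "\<forall>j\<in>{1..n}. complex_of_real (p $$ (0, j)) = mtrace (W1 * kron (1\<^sub>m d1) (F1 j))"
    and p3: "\<forall>i\<in>{1..n}. \<forall>j\<in>{1..n}. complex_of_real (p $$ (i, j)) = mtrace (W1 * kron (E1 i) (F1 j))"
    using pB unfolding bell_def by blast
  obtain d2 E2 F2 W2 where q: "q \<in> carrier_mat (n+1) (n+1)" "q $$ (0,0) = 1"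
    and pr2: "\<forall>i\<in>{1..n}. is_proj d2 (E2 i) \<and> is_proj d2 (F2 i)" and Wd2: "is_density (d2 * d2) W2"
    and q1: "\<forall>i\<in>{1..n}. complex_of_real (q $$ (i, 0)) = mtrace (W2 * kron (E2 i) (1\<^sub>m d2))"
    and q2: "\<forall>j\<in>{1..n}. complex_of_real (q $$ (0, j)) = mtrace (W2 * kron (1\<^sub>m d2) (F2 j))"
    and q3: "\<forall>i\<in>{1..n}. \<forall>j\<in>{1..n}. complex_of_real (q $$ (i, j)) = mtrace (W2 * kron (E2 i) (F2 j))"
    using qB unfolding bell_def by blast
  let ?r = "t \<cdot>\<^sub>m p + (1 - t) \<cdot>\<^sub>m q"
  let ?d = "d1 + d2"
  let ?E = "\<lambda>i. dsum d1 d2 (E1 i) (E2 i)"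
  let ?F = "\<lambda>i. dsum d1 d2 (F1 i) (F2 i)"
  let ?W = "wsum d1 d2 t W1 W2"
  have cW1: "W1 \<in> carrier_mat (d1*d1) (d1*d1)" and cW2: "W2 \<in> carrier_mat (d2*d2) (d2*d2)"
    using Wd1 Wd2 by (auto simp: is_density_def)
  have cE1: "\<And>i. i \<in> {1..n} \<Longrightarrow> E1 i \<in> carrier_mat d1 d1 \<and> F1 i \<in> carrier_mat d1 d1"
    and cE2: "\<And>i. i \<in> {1..n} \<Longrightarrow> E2 i \<in> carrier_mat d2 d2 \<and> F2 i \<in> carrier_mat d2 d2"
    using pr1 pr2 by (auto simp: is_proj_def)
  have rc: "?r \<in> carrier_mat (n+1) (n+1)" using p q by auto
  have r00: "?r $$ (0,0) = 1" using p q by simp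
  have ridx: "\<And>i j. i \<le> n \<Longrightarrow> j \<le> n \<Longrightarrow> complex_of_real (?r $$ (i,j)) =
     complex_of_real t * complex_of_real (p $$ (i,j)) + complex_of_real (1-t) * complex_of_real (q $$ (i,j))"
    using p q by simp
  have a1: "\<forall>i\<in>{1..n}. is_proj ?d (?E i) \<and> is_proj ?d (?F i)"
    using pr1 pr2 dsum_proj by auto
  have a2: "is_density (?d * ?d) ?W" using dens_comb[OF Wd1 Wd2] t by auto
  have a3: "\<forall>i\<in>{1..n}. complex_of_real (?r $$ (i, 0)) = mtrace (?W * kron (?E i) (1\<^sub>m ?d))"
  proof
    fix i assume i: "i \<in> {1..n}"
    then show "complex_of_real (?r $$ (i, 0)) = mtrace (?W * kron (?E i) (1\<^sub>m ?d))"
      using ridx[of i 0] p1 q1 cE1[OF i] cE2[OF i] cW1 cW2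
      by (simp add: one_dsum tr_comb)
  qed
  have a4: "\<forall>j\<in>{1..n}. complex_of_real (?r $$ (0, j)) = mtrace (?W * kron (1\<^sub>m ?d) (?F j))"
  proof
    fix j assume j: "j \<in> {1..n}"
    then show "complex_of_real (?r $$ (0, j)) = mtrace (?W * kron (1\<^sub>m ?d) (?F j))"
      using ridx[of 0 j] p2 q2 cE1[OF j] cE2[OF j] cW1 cW2
      by (simp add: one_dsum tr_comb)
  qed
  have a5: "\<forall>i\<in>{1..n}. \<forall>j\<in>{1..n}. complex_of_real (?r $$ (i, j)) = mtrace (?W * kron (?E i) (?F j))"
  proof (intro ballI)
    fix i j assume i: "i \<in> {1..n}" and j: "j \<in> {1..n}"
    then show "complex_of_real (?r $$ (i, j)) = mtrace (?W * kron (?E i) (?F j))"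
      using ridx[of i j] p3 q3 cE1[OF i] cE2[OF i] cE1[OF j] cE2[OF j] cW1 cW2
      by (simp add: tr_comb)
  qed
  show "?r \<in> bell n" unfolding bell_def mem_Collect_eq
    apply (intro conjI rc r00)
    apply (rule exI[of _ ?d], rule exI[of _ ?E], rule exI[of _ ?F], rule exI[of _ ?W])
    using a1 a2 a3 a4 a5 by blast
qed



lemma conv_comb:
  assumes cv: "convex_mat_set S" and Sc: "S \<subseteq> carrier_mat N N"
    and fin: "finite V" and ne: "V \<noteq> {}"
    and gS: "\<forall>v\<in>V. g v \<in> S" and wpos: "\<forall>v\<in>V. w v \<ge> 0" and w1: "sum w V = 1"
    and pc: "p \<in> carrier_mat N N"
    and pe: "\<forall>i<N. \<forall>j<N. p $$ (i,j) = (\<Sum>v\<in>V. w v * g v $$ (i,j))"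
  shows "p \<in> S"
  using fin ne gS wpos w1 pc pe
proof (induction V arbitrary: p w rule: finite_ne_induct)
  case (singleton x)
  have "p = g x"
    using singleton Sc by (intro eq_matI) auto
  then show ?case using singleton by simp
next
  case (insert x F)
  have wF: "sum w F = 1 - w x" using insert by (simp add: sum.insert)
  have wFpos: "\<forall>v\<in>F. w v \<ge> 0" using insert by auto
  have gx: "g x \<in> carrier_mat N N" using insert Sc by auto
  show ?case
  proof (cases "w x = 1")
    case True
    then have "sum w F = 0" using wF by simp
    then have z: "\<forall>v\<in>F. w v = 0" using sum_nonneg_eq_0_iff[OF insert(1)] wFpos by blast
    have "p = g x"
      using insert True z gx by (intro eq_matI) auto
    then show ?thesis using insert by simp
  next
    case False
    have "w x \<le> 1" using wF sum_nonneg[of F w] wFpos by simp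
    then have sp: "1 - w x > 0" using False by simp
    define q where "q = Matrix.mat N N (\<lambda>(i,j). \<Sum>v\<in>F. (w v / (1 - w x)) * g v $$ (i,j))"
    have qS: "q \<in> S"
    proof (rule insert.IH)
      show "\<forall>v\<in>F. g v \<in> S" using insert by auto
      show "\<forall>v\<in>F. 0 \<le> w v / (1 - w x)" using wFpos sp by auto
      show "(\<Sum>v\<in>F. w v / (1 - w x)) = 1" using wF sp by (simp add: sum_divide_distrib[symmetric])
      show "q \<in> carrier_mat N N" by (simp add: q_def)
      show "\<forall>i<N. \<forall>j<N. q $$ (i, j) = (\<Sum>v\<in>F. w v / (1 - w x) * g v $$ (i, j))" by (simp add: q_def)
    qed
    have "w x \<cdot>\<^sub>m g x + (1 - w x) \<cdot>\<^sub>m q \<in> S"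
    proof -
      have "0 \<le> w x" "g x \<in> S" using insert by auto
      then show ?thesis using cv qS \<open>w x \<le> 1\<close> unfolding convex_mat_set_def by blast
    qed
    moreover have "p = w x \<cdot>\<^sub>m g x + (1 - w x) \<cdot>\<^sub>m q"
    proof (rule eq_matI)
      fix i j assume "i < dim_row (w x \<cdot>\<^sub>m g x + (1 - w x) \<cdot>\<^sub>m q)" "j < dim_col (w x \<cdot>\<^sub>m g x + (1 - w x) \<cdot>\<^sub>m q)"
      then have i: "i < N" and j: "j < N" using gx by (auto simp: q_def)
      have "p $$ (i,j) = w x * g x $$ (i,j) + (\<Sum>v\<in>F. w v * g v $$ (i,j))"
        using insert i j by (simp add: sum.insert)
      also have "(\<Sum>v\<in>F. w v * g v $$ (i,j)) = (1 - w x) * (\<Sum>v\<in>F. (w v / (1 - w x)) * g v $$ (i,j))"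
        using sp by (simp add: sum_distrib_left)
      finally show "p $$ (i,j) = (w x \<cdot>\<^sub>m g x + (1 - w x) \<cdot>\<^sub>m q) $$ (i,j)"
        using i j gx by (simp add: q_def)
    qed (use gx insert in \<open>auto simp: q_def\<close>)
    ultimately show ?thesis by simp
  qed
qed

lemma tr1: "A \<in> carrier_mat 1 1 \<Longrightarrow> B \<in> carrier_mat 1 1 \<Longrightarrow> mtrace (1\<^sub>m 1 * kron A B) = A $$ (0,0) * B $$ (0,0)"
  by (subst tr_kron[of _ 1]) auto

definition detm :: "nat \<Rightarrow> nat set \<Rightarrow> nat set \<Rightarrow> real mat" where
  "detm n S1 S2 = Matrix.mat (n+1) (n+1) (\<lambda>(i,j). if (i=0 \<or> i\<in>S1) \<and> (j=0 \<or> j\<in>S2) then 1 else 0)"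

definition ind1 :: "bool \<Rightarrow> complex mat" where
  "ind1 b = Matrix.mat 1 1 (\<lambda>_. if b then 1 else 0)"

lemma ind1_proj: "is_proj 1 (ind1 b)"
  unfolding is_proj_def ind1_def
  by (auto intro!: eq_matI simp: scalar_prod_def)

lemma one1_density: "is_density 1 (1\<^sub>m 1)"
  unfolding is_density_def
proof (intro conjI ballI)
  fix v :: "complex Matrix.vec" assume v: "v \<in> carrier_vec 1"
  have e: "(1\<^sub>m 1 *\<^sub>v v) \<bullet>c v = vec_index v 0 * cnj (vec_index v 0)"
    using v by (simp add: scalar_prod_def)
  show "Im ((1\<^sub>m 1 *\<^sub>v v) \<bullet>c v) = 0" unfolding e by simp
  show "Re ((1\<^sub>m 1 *\<^sub>v v) \<bullet>c v) \<ge> 0" unfolding e by simp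
qed (auto simp: mtrace_def)

lemma trk1: "A \<in> carrier_mat 1 1 \<Longrightarrow> B \<in> carrier_mat 1 1 \<Longrightarrow> mtrace (1\<^sub>m 1 * kron A B) = A $$ (0,0) * B $$ (0,0)"
  by (simp add: mtrace_def index_kron)

lemma detm_bell: "detm n S1 S2 \<in> bell n"
proof -
  have c: "\<And>b. ind1 b \<in> carrier_mat 1 1" by (simp add: ind1_def)
  have i1: "\<And>b. ind1 b $$ (0,0) = (if b then 1 else 0)" by (simp add: ind1_def)
  have t1: "\<And>i. mtrace (1\<^sub>m 1 * kron (ind1 (i \<in> S1)) (1\<^sub>m 1)) = (if i \<in> S1 then 1 else 0)"
    using trk1[OF c one_carrier_mat] i1 by simp
  have t2: "\<And>j. mtrace (1\<^sub>m 1 * kron (1\<^sub>m 1) (ind1 (j \<in> S2))) = (if j \<in> S2 then 1 else 0)"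
    using trk1[OF one_carrier_mat c] i1 by simp
  have t3: "\<And>i j. mtrace (1\<^sub>m 1 * kron (ind1 (i \<in> S1)) (ind1 (j \<in> S2))) = (if i \<in> S1 \<and> j \<in> S2 then 1 else 0)"
    using trk1[OF c c] i1 by simp
  show ?thesis unfolding bell_def mem_Collect_eq
    apply (intro conjI)
      apply (simp add: detm_def)
     apply (simp add: detm_def)
    apply (rule exI[of _ 1], rule exI[of _ "\<lambda>i. ind1 (i \<in> S1)"], rule exI[of _ "\<lambda>i. ind1 (i \<in> S2)"], rule exI[of _ "1\<^sub>m 1"])
    apply (intro conjI ballI)
    using ind1_proj one1_density
    by (simp_all only: t1 t2 t3) (auto simp: detm_def)
qed


lemma c_sub_bell: "cset n TYPE('a) \<subseteq> bell n"
proof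
  fix p assume "p \<in> cset n TYPE('a)"
  then obtain M :: "'a measure" and A B where p: "p \<in> carrier_mat (n+1) (n+1)" "p $$ (0,0) = 1"
    and PS: "prob_space M" and AB: "\<forall>i\<in>{1..n}. A i \<in> sets M \<and> B i \<in> sets M"
    and m1: "\<forall>i\<in>{1..n}. p $$ (i, 0) = measure M (A i)"
    and m2: "\<forall>j\<in>{1..n}. p $$ (0, j) = measure M (B j)"
    and m3: "\<forall>i\<in>{1..n}. \<forall>j\<in>{1..n}. p $$ (i, j) = measure M (A i \<inter> B j)"
    unfolding cset_def by blast
  interpret prob_space M by (rule PS)
  define pat where "pat x = ({i\<in>{1..n}. x \<in> A i}, {j\<in>{1..n}. x \<in> B j})" for x
  define V where "V = Pow {1..n} \<times> Pow {1..n}"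
  define w where "w s = measure M {x\<in>space M. pat x = s}" for s
  have finV: "finite V" and neV: "V \<noteq> {}" by (auto simp: V_def)
  have patV: "\<And>x. pat x \<in> V" by (auto simp: V_def pat_def)
  have meas: "{x\<in>space M. pat x = s} \<in> sets M" if s: "s \<in> V" for s
  proof -
    obtain S1 S2 where s12: "s = (S1, S2)" "S1 \<subseteq> {1..n}" "S2 \<subseteq> {1..n}" using s by (auto simp: V_def)
    have eq: "{x\<in>space M. pat x = s} = {x\<in>space M. \<forall>i\<in>{1..n}. (x \<in> A i \<longleftrightarrow> i \<in> S1) \<and> (x \<in> B i \<longleftrightarrow> i \<in> S2)}"
      using s12 unfolding pat_def by auto
    have one: "{x\<in>space M. (x \<in> C \<longleftrightarrow> c)} \<in> sets M" if "C \<in> sets M" for C c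
    proof -
      have "{x\<in>space M. (x \<in> C \<longleftrightarrow> c)} = (if c then C else space M - C)"
        using sets.sets_into_space[OF that] by auto
      then show ?thesis using that by auto
    qed
    show ?thesis unfolding eq
      by (intro sets.sets_Collect_finite_All sets.sets_Collect_conj one) (use AB in auto)
  qed
  have key: "measure M {x\<in>space M. Q (pat x)} = (\<Sum>s\<in>V. w s * (if Q s then 1 else 0))" for Q
  proof -
    have "{x\<in>space M. Q (pat x)} = (\<Union>s\<in>{s\<in>V. Q s}. {x\<in>space M. pat x = s})" using patV by auto
    moreover have "measure M (\<Union>s\<in>{s\<in>V. Q s}. {x\<in>space M. pat x = s}) = (\<Sum>s\<in>{s\<in>V. Q s}. measure M {x\<in>space M. pat x = s})"
      by (rule finite_measure_finite_Union) (use finV meas in \<open>auto simp: disjoint_family_on_def\<close>)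
    ultimately have "measure M {x\<in>space M. Q (pat x)} = (\<Sum>s\<in>{s\<in>V. Q s}. w s)"
      unfolding w_def by simp
    also have "\<dots> = (\<Sum>s\<in>V. w s * (if Q s then 1 else 0))"
      using finV by (simp add: sum.inter_filter if_distrib cong: if_cong)
    finally show ?thesis .
  qed
  show "p \<in> bell n"
  proof (rule conv_comb[of "bell n" "n+1" V "\<lambda>s. detm n (fst s) (snd s)" w p])
    show "convex_mat_set (bell n)" by (rule bell_convex)
    show "bell n \<subseteq> carrier_mat (n+1) (n+1)" by (auto simp: bell_def)
    show "finite V" "V \<noteq> {}" by (fact finV, fact neV)
    show "\<forall>v\<in>V. detm n (fst v) (snd v) \<in> bell n" using detm_bell by auto
    show "\<forall>v\<in>V. 0 \<le> w v" by (auto simp: w_def)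
    show "sum w V = 1" using key[of "\<lambda>_. True"] prob_space by simp
    show "p \<in> carrier_mat (n+1) (n+1)" by (fact p(1))
    show "\<forall>i<n+1. \<forall>j<n+1. p $$ (i,j) = (\<Sum>v\<in>V. w v * detm n (fst v) (snd v) $$ (i,j))"
    proof (intro allI impI)
      fix i j assume i: "i < n+1" and j: "j < n+1"
      have "(\<Sum>v\<in>V. w v * detm n (fst v) (snd v) $$ (i,j)) =
          (\<Sum>v\<in>V. w v * (if (i=0 \<or> i \<in> fst v) \<and> (j=0 \<or> j \<in> snd v) then 1 else 0))"
        using i j by (simp add: detm_def)
      also have "\<dots> = measure M {x\<in>space M. (i=0 \<or> i \<in> fst (pat x)) \<and> (j=0 \<or> j \<in> snd (pat x))}"
        by (rule key[symmetric])
      also have "\<dots> = p $$ (i,j)"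
      proof -
        have sA: "\<And>i. i\<in>{1..n} \<Longrightarrow> A i \<subseteq> space M" and sB: "\<And>i. i\<in>{1..n} \<Longrightarrow> B i \<subseteq> space M"
          using AB sets.sets_into_space by blast+
        show ?thesis
        proof (cases "i = 0"; cases "j = 0")
          assume "i = 0" "j = 0" then show ?thesis using p(2) prob_space by simp
        next
          assume h: "i = 0" "j \<noteq> 0"
          then have jn: "j \<in> {1..n}" using j by auto
          have "{x\<in>space M. (i=0 \<or> i \<in> fst (pat x)) \<and> (j=0 \<or> j \<in> snd (pat x))} = B j"
            using h jn sB[OF jn] by (auto simp: pat_def)
          then show ?thesis using m2 jn h by simp
        next
          assume h: "i \<noteq> 0" "j = 0"
          then have jn: "i \<in> {1..n}" using i by auto
          have "{x\<in>space M. (i=0 \<or> i \<in> fst (pat x)) \<and> (j=0 \<or> j \<in> snd (pat x))} = A i"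
            using h jn sA[OF jn] by (auto simp: pat_def)
          then show ?thesis using m1 jn h by simp
        next
          assume h: "i \<noteq> 0" "j \<noteq> 0"
          then have "i \<in> {1..n}" "j \<in> {1..n}" using i j by auto
          moreover have "{x\<in>space M. (i=0 \<or> i \<in> fst (pat x)) \<and> (j=0 \<or> j \<in> snd (pat x))} = A i \<inter> B j"
            using h calculation sA[of i] by (auto simp: pat_def)
          ultimately show ?thesis using m3 by simp
        qed
      qed
      finally show "p $$ (i,j) = (\<Sum>v\<in>V. w v * detm n (fst v) (snd v) $$ (i,j))" by simp
    qed
  qed
qed

theorem theorem1:
  fixes n :: nat
  assumes "n \<ge> 1"
  shows "convex_mat_set (bell n) \<and> bell n \<subseteq> qset n \<and> cset n TYPE('a) \<subseteq> bell n"
  using bell_convex bell_sub_q c_sub_bell by blast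

end
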